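(* Let $V$ be a finite-dimensional real vector space with filtration $V=V_1\supseteq\cdots\supseteq V_r\supseteq V_{r+1}=\{0\}$, and let $V=\bigoplus_{i=1}^r m_i$ and $V=\bigoplus_{i=1}^r m_i'$ be two decompositions with $V_i=m_i\oplus V_{i+1}=m_i'\oplus V_{i+1}$ for each $i$, with associated dilation groups $(\delta_t)_{t>0}$ and $(\delta_t')_{t>0}$. Let $\phi:V\to V$ be the linear isomorphism whose restriction to each $m_i$ is the projection of $m_i$ onto $m_i'$ along $V_{i+1}$ (so that $\delta'_t=\phi\circ\delta_t\circ\phi^{-1}$). If $|\cdot|'$ is a quasi-norm homogeneous with respect to $(\delta'_t)$, then there is a unique quasi-norm $|\cdot|$ homogeneous with respect to $(\delta_t)$ such that $|x|-|x|'=o(|x|)$ as $|x|\to\infty$; moreover $|x|=|\phi(x)|'$.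
   Context: The dilation group associated to a decomposition $V=\bigoplus m_i$ with $V_i=m_i\oplus V_{i+1}$ is the one-parameter group of linear maps with $\delta_t(x)=t^ix$ for $x\in m_i$. A (homogeneous) quasi-norm associated to $(\delta_t)$ is a continuous function $|\cdot|:V\to[0,\infty)$ such that $|x|=0$ iff $x=0$, and $|\delta_t(x)|=t|x|$ for all $t>0$, $x\in V$. *)

theory Defs
  imports "HOL-Analysis.Analysis"
begin

definition filtration :: "nat \<Rightarrow> (nat \<Rightarrow> 'a::real_vector set) \<Rightarrow> bool" where
  "filtration r V \<longleftrightarrow> V 1 = UNIV \<and> V (Suc r) = {0} \<and>
     (\<forall>i\<in>{1..Suc r}. subspace (V i)) \<and> (\<forall>i\<in>{1..r}. V (Suc i) \<subseteq> V i)"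

definition adapted_decomposition ::
  "nat \<Rightarrow> (nat \<Rightarrow> 'a::real_vector set) \<Rightarrow> (nat \<Rightarrow> 'a set) \<Rightarrow> bool" where
  "adapted_decomposition r V m \<longleftrightarrow>
     (\<forall>i\<in>{1..r}. subspace (m i) \<and> m i \<inter> V (Suc i) = {0} \<and>
        {x + y | x y. x \<in> m i \<and> y \<in> V (Suc i)} = V i)"

definition dilation_group ::
  "nat \<Rightarrow> (nat \<Rightarrow> 'a::real_vector set) \<Rightarrow> (real \<Rightarrow> 'a \<Rightarrow> 'a) \<Rightarrow> bool" where
  "dilation_group r m \<delta> \<longleftrightarrow>
     (\<forall>t>0. linear (\<delta> t) \<and> (\<forall>i\<in>{1..r}. \<forall>x\<in>m i. \<delta> t x = (t ^ i) *\<^sub>R x))"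

definition quasi_norm ::
  "(real \<Rightarrow> 'a::real_normed_vector \<Rightarrow> 'a) \<Rightarrow> ('a \<Rightarrow> real) \<Rightarrow> bool" where
  "quasi_norm \<delta> N \<longleftrightarrow> continuous_on UNIV N \<and> (\<forall>x. N x \<ge> 0) \<and>
     (\<forall>x. N x = 0 \<longleftrightarrow> x = 0) \<and> (\<forall>t>0. \<forall>x. N (\<delta> t x) = t * N x)"

definition little_o_at_infinity :: "('a \<Rightarrow> real) \<Rightarrow> ('a \<Rightarrow> real) \<Rightarrow> bool" where
  "little_o_at_infinity N N' \<longleftrightarrow>
     (\<forall>\<epsilon>>0. \<exists>R. \<forall>x. N x \<ge> R \<longrightarrow> \<bar>N x - N' x\<bar> \<le> \<epsilon> * N x)"

end

theory Submission
  imports Defs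
begin


lemma adD:
  assumes "adapted_decomposition r V m" "k \<in> {1..r}"
  shows "subspace (m k)" "m k \<inter> V (Suc k) = {0}"
    "{x + y | x y. x \<in> m k \<and> y \<in> V (Suc k)} = V k"
proof -
  have h: "subspace (m k) \<and> m k \<inter> V (Suc k) = {0} \<and> {x + y | x y. x \<in> m k \<and> y \<in> V (Suc k)} = V k"
    using bspec[OF assms(1)[unfolded adapted_decomposition_def] assms(2)] .
  then show "subspace (m k)" by (rule conjunct1)
  from h show "m k \<inter> V (Suc k) = {0}" by (rule conjunct1[OF conjunct2])
  from h show "{x + y | x y. x \<in> m k \<and> y \<in> V (Suc k)} = V k" by (rule conjunct2[OF conjunct2])
qed

lemma adV:
  assumes "adapted_decomposition r V m" "k \<in> {1..r}" "a \<in> m k" "b \<in> V (Suc k)"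
  shows "a + b \<in> V k"
proof -
  have "a + b \<in> {x + y | x y. x \<in> m k \<and> y \<in> V (Suc k)}" using assms(3,4) by blast
  then show ?thesis using adD(3)[OF assms(1,2)] by simp
qed

lemma V_induct:
  assumes filt: "filtration r V" and ad: "adapted_decomposition r V m"
    and zero: "P (Suc r) 0"
    and step: "\<And>k a b. k \<in> {1..r} \<Longrightarrow> a \<in> m k \<Longrightarrow> b \<in> V (Suc k) \<Longrightarrow> P (Suc k) b \<Longrightarrow> P k (a + b)"
  shows "k \<in> {1..Suc r} \<Longrightarrow> y \<in> V k \<Longrightarrow> P k y"
proof (induct "Suc r - k" arbitrary: k y)
  case 0
  then have "k = Suc r" by auto
  with filt have "V k = {0}" by (simp add: filtration_def)
  with 0 show ?case using zero \<open>k = Suc r\<close> by simp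
next
  case (Suc j)
  then have k: "k \<in> {1..r}" and j: "j = Suc r - Suc k" by auto
  from Suc.prems(2) adD(3)[OF ad k] have "y \<in> {x + y | x y. x \<in> m k \<and> y \<in> V (Suc k)}" by simp
  then obtain a b where ab: "a \<in> m k" "b \<in> V (Suc k)" "y = a + b" by blast
  have "P (Suc k) b" using Suc.hyps(1)[OF j] k ab(2) by auto
  then show ?case using step[OF k ab(1,2)] ab(3) by simp
qed

lemma linear_norm_basis_bound:
  fixes f :: "'a::euclidean_space \<Rightarrow> 'b::real_normed_vector"
  assumes "linear f"
  shows "norm (f y) \<le> norm y * (\<Sum>b\<in>Basis. norm (f b))"
proof -
  have "f y = f (\<Sum>b\<in>Basis. (y \<bullet> b) *\<^sub>R b)" by (rule arg_cong[where f=f], rule euclidean_representation[symmetric])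
  also have "\<dots> = (\<Sum>b\<in>Basis. f ((y \<bullet> b) *\<^sub>R b))" by (rule linear_sum[OF assms])
  also have "\<dots> = (\<Sum>b\<in>Basis. (y \<bullet> b) *\<^sub>R f b)" by (rule sum.cong, rule refl, rule linear_scale[OF assms])
  finally have "norm (f y) \<le> (\<Sum>b\<in>Basis. norm ((y \<bullet> b) *\<^sub>R f b))"
    by (metis norm_sum)
  also have "\<dots> = (\<Sum>b\<in>Basis. \<bar>y \<bullet> b\<bar> * norm (f b))" by (rule sum.cong, rule refl, rule norm_scaleR)
  also have "\<dots> \<le> (\<Sum>b\<in>Basis. norm y * norm (f b))"
    by (intro sum_mono mult_right_mono Basis_le_norm norm_ge_zero)
  finally show ?thesis by (simp add: sum_distrib_left)
qed

lemma qn_unique: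
  assumes q1: "quasi_norm \<delta> N1" and q2: "quasi_norm \<delta> N2"
    and o1: "little_o_at_infinity N1 N'" and o2: "little_o_at_infinity N2 N'"
  shows "N1 = N2"
proof
  fix x
  show "N1 x = N2 x"
  proof (cases "x = 0")
    case True then show ?thesis using q1 q2 unfolding quasi_norm_def by metis
  next
    case False
    then have p1: "N1 x > 0" and p2: "N2 x > 0" using q1 q2
      by (auto simp: quasi_norm_def less_le)
    have key: "\<bar>N1 x - N2 x\<bar> \<le> e * (N1 x + N2 x)" if e: "e > 0" for e
    proof -
      obtain R1 where R1: "\<forall>x. N1 x \<ge> R1 \<longrightarrow> \<bar>N1 x - N' x\<bar> \<le> e * N1 x"
        using o1 e unfolding little_o_at_infinity_def by blast
      obtain R2 where R2: "\<forall>x. N2 x \<ge> R2 \<longrightarrow> \<bar>N2 x - N' x\<bar> \<le> e * N2 x"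
        using o2 e unfolding little_o_at_infinity_def by blast
      define t where "t = max 1 (max (R1 / N1 x) (R2 / N2 x))"
      have t: "t > 0" unfolding t_def by simp
      have h1: "N1 (\<delta> t x) = t * N1 x" using q1 t by (simp add: quasi_norm_def)
      have h2: "N2 (\<delta> t x) = t * N2 x" using q2 t by (simp add: quasi_norm_def)
      have "R1 / N1 x \<le> t" unfolding t_def by simp
      then have "R1 \<le> t * N1 x" using p1 by (simp add: divide_le_eq)
      then have a1: "\<bar>t * N1 x - N' (\<delta> t x)\<bar> \<le> e * (t * N1 x)" using R1 h1 by metis
      have "R2 / N2 x \<le> t" unfolding t_def by simp
      then have "R2 \<le> t * N2 x" using p2 by (simp add: divide_le_eq)
      then have a2: "\<bar>t * N2 x - N' (\<delta> t x)\<bar> \<le> e * (t * N2 x)" using R2 h2 by metis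
      have "\<bar>t * N1 x - t * N2 x\<bar> \<le> e * (t * N1 x) + e * (t * N2 x)"
        using a1 a2 by linarith
      moreover have "\<bar>t * N1 x - t * N2 x\<bar> = t * \<bar>N1 x - N2 x\<bar>"
        using t by (simp add: right_diff_distrib[symmetric] abs_mult)
      moreover have "e * (t * N1 x) + e * (t * N2 x) = t * (e * (N1 x + N2 x))"
        by (simp add: algebra_simps)
      ultimately have "t * \<bar>N1 x - N2 x\<bar> \<le> t * (e * (N1 x + N2 x))" by simp
      then show ?thesis using t by simp
    qed
    show ?thesis
    proof (rule ccontr)
      assume ne: "N1 x \<noteq> N2 x"
      define e where "e = \<bar>N1 x - N2 x\<bar> / (2 * (N1 x + N2 x))"
      have "e > 0" using ne p1 p2 unfolding e_def by auto
      moreover have "e * (N1 x + N2 x) = \<bar>N1 x - N2 x\<bar> / 2"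
        unfolding e_def using p1 p2 by (simp add: field_simps)
      ultimately have "\<bar>N1 x - N2 x\<bar> \<le> \<bar>N1 x - N2 x\<bar> / 2"
        using key by metis
      then show False using ne by simp
    qed
  qed
qed




lemma bounded_level:
  fixes \<delta> :: "real \<Rightarrow> 'a::euclidean_space \<Rightarrow> 'a"
  assumes q: "quasi_norm \<delta> N"
    and lin: "\<And>t. t>0 \<Longrightarrow> linear (\<delta> t)"
    and path: "\<And>y. \<exists>f. continuous_on UNIV f \<and> f 0 = 0 \<and> (\<forall>s>0. f s = \<delta> s y)"
    and one: "\<And>y. \<delta> 1 y = y"
    and grp: "\<And>s t y. s>0 \<Longrightarrow> t>0 \<Longrightarrow> \<delta> s (\<delta> t y) = \<delta> (s*t) y"
  shows "\<exists>M. \<forall>y. N y \<le> 1 \<longrightarrow> norm y \<le> M"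
proof -
  obtain b :: 'a where b: "b \<in> Basis" using nonempty_Basis by blast
  have ne: "sphere (0::'a) 1 \<noteq> {}" using b by (auto simp: norm_Basis)
  have cont: "continuous_on (sphere 0 1) N"
    using q continuous_on_subset[of UNIV N] by (auto simp: quasi_norm_def)
  obtain x0 where x0: "x0 \<in> sphere 0 1" "\<forall>y\<in>sphere 0 1. N x0 \<le> N y"
    using continuous_attains_inf[OF compact_sphere ne cont] by blast
  define c where "c = N x0"
  have "x0 \<noteq> 0" using x0 by auto
  then have c: "c > 0" using q unfolding c_def quasi_norm_def by (metis less_le)
  have small: "norm z < 1" if zc: "N z < c" for z
  proof (rule ccontr)
    assume "\<not> norm z < 1"
    hence z1: "1 \<le> norm z" by simp
    obtain f where f: "continuous_on UNIV f" "f 0 = 0" "\<forall>s>0. f s = \<delta> s z" using path by blast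
    have "continuous_on {0..1} (\<lambda>s. norm (f s))"
      by (intro continuous_on_norm continuous_on_subset[OF f(1)]) auto
    moreover have "norm (f 1) \<ge> 1" using f(3) one z1 by simp
    ultimately obtain s where s: "0 \<le> s" "s \<le> 1" "norm (f s) = 1"
      using IVT'[of "\<lambda>s. norm (f s)" 0 1 1] f(2) by auto
    have "s \<noteq> 0" using s f(2) by auto
    then have sp: "s > 0" using s by simp
    then have "\<delta> s z \<in> sphere 0 1" using s f by auto
    then have "c \<le> N (\<delta> s z)" using x0 c_def by auto
    also have "N (\<delta> s z) = s * N z" using q sp by (simp add: quasi_norm_def)
    also have "\<dots> \<le> 1 * N z" using s q by (intro mult_right_mono) (auto simp: quasi_norm_def)
    finally show False using zc by simp
  qed
  obtain B where B: "\<forall>x. norm (\<delta> (2/c) x) \<le> B * norm x"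
    using linear_bounded[OF lin[of "2/c"]] c by auto
  show ?thesis
  proof (intro exI allI impI)
    fix y assume y: "N y \<le> 1"
    have "N (\<delta> (c/2) y) = c/2 * N y" using q c by (simp add: quasi_norm_def)
    also have "\<dots> \<le> c/2" using y c by simp
    finally have n1: "norm (\<delta> (c/2) y) < 1" using small c by force
    have "y = \<delta> (2/c) (\<delta> (c/2) y)" using grp[of "2/c" "c/2" y] c one by simp
    then have "norm y \<le> B * norm (\<delta> (c/2) y)" using B by metis
    also have "\<dots> \<le> \<bar>B\<bar> * norm (\<delta> (c/2) y)" by (intro mult_right_mono) auto
    also have "\<dots> \<le> \<bar>B\<bar> * 1" using n1 by (intro mult_left_mono) auto
    finally show "norm y \<le> \<bar>B\<bar>" by simp
  qed
qed



theorem proposition2p6: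
  fixes r :: nat
    and V m m' :: "nat \<Rightarrow> 'a::euclidean_space set"
    and \<delta> \<delta>' :: "real \<Rightarrow> 'a \<Rightarrow> 'a"
    and \<phi> :: "'a \<Rightarrow> 'a"
    and N' :: "'a \<Rightarrow> real"
  assumes "1 \<le> r"
    and "filtration r V"
    and "adapted_decomposition r V m"
    and "adapted_decomposition r V m'"
    and "dilation_group r m \<delta>"
    and "dilation_group r m' \<delta>'"
    and "linear \<phi>"
    and "\<forall>i\<in>{1..r}. \<forall>x\<in>m i. \<phi> x \<in> m' i \<and> x - \<phi> x \<in> V (Suc i)"
    and "quasi_norm \<delta>' N'"
  shows "(\<exists>!N. quasi_norm \<delta> N \<and> little_o_at_infinity N N') \<and>
         (\<forall>N. quasi_norm \<delta> N \<and> little_o_at_infinity N N' \<longrightarrow> N = (\<lambda>x. N' (\<phi> x)))"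
proof -
  note filt = assms(2) and ad = assms(3) and ad' = assms(4) and lphi = assms(7)
    and phim = assms(8) and q' = assms(9)
  have V1: "V 1 = UNIV" and Vr: "V (Suc r) = {0}" using filt by (auto simp: filtration_def)
  have Vsub: "\<And>k. k \<in> {1..Suc r} \<Longrightarrow> subspace (V k)" using filt by (auto simp: filtration_def)
  have Vmono: "\<And>k. k \<in> {1..r} \<Longrightarrow> V (Suc k) \<subseteq> V k" using filt by (auto simp: filtration_def)
  have msub: "\<And>k. k \<in> {1..r} \<Longrightarrow> subspace (m k)" using adD(1)[OF ad] by blast
  have mint: "\<And>k. k \<in> {1..r} \<Longrightarrow> m k \<inter> V (Suc k) = {0}" using adD(2)[OF ad] by blast
  have mint': "\<And>k. k \<in> {1..r} \<Longrightarrow> m' k \<inter> V (Suc k) = {0}" using adD(2)[OF ad'] by blast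
  have mV': "\<And>k x. k \<in> {1..r} \<Longrightarrow> x \<in> m' k \<Longrightarrow> x \<in> V k"
  proof -
    fix k x assume k: "k \<in> {1..r}" and x: "x \<in> m' k"
    have "0 \<in> V (Suc k)" using Vsub[of "Suc k"] k by (auto simp: subspace_0)
    from adV[OF ad' k x this] show "x \<in> V k" by simp
  qed
  have lind: "\<And>t. t > 0 \<Longrightarrow> linear (\<delta> t)" using assms(5) by (auto simp: dilation_group_def)
  have dm: "\<And>t k x. t > 0 \<Longrightarrow> k \<in> {1..r} \<Longrightarrow> x \<in> m k \<Longrightarrow> \<delta> t x = (t ^ k) *\<^sub>R x"
    using assms(5) by (auto simp: dilation_group_def)
  have lind': "\<And>t. t > 0 \<Longrightarrow> linear (\<delta>' t)" using assms(6) by (auto simp: dilation_group_def)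
  have dm': "\<And>t k x. t > 0 \<Longrightarrow> k \<in> {1..r} \<Longrightarrow> x \<in> m' k \<Longrightarrow> \<delta>' t x = (t ^ k) *\<^sub>R x"
    using assms(6) by (auto simp: dilation_group_def)
  have allV: "\<And>y. y \<in> V 1" using V1 by simp
  have one_in: "1 \<in> {1..Suc r}" by simp

  have phiV: "\<phi> y \<in> V k" if "k \<in> {1..Suc r}" "y \<in> V k" for k y
  proof (rule V_induct[OF filt ad, where P = "\<lambda>k y. \<phi> y \<in> V k", OF _ _ that])
    show "\<phi> 0 \<in> V (Suc r)" using Vr linear_0[OF lphi] by simp
  next
    fix k a b assume k: "k \<in> {1..r}" and a: "a \<in> m k" and b: "b \<in> V (Suc k)" and ih: "\<phi> b \<in> V (Suc k)"
    have "\<phi> a \<in> V k" using phim k a mV' by blast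
    moreover have "\<phi> b \<in> V k" using ih Vmono k by blast
    ultimately show "\<phi> (a + b) \<in> V k"
      using Vsub[of k] k by (simp add: linear_add[OF lphi] subspace_add)
  qed

  have phiinj: "\<phi> y = 0 \<longrightarrow> y = 0" for y
  proof (rule V_induct[OF filt ad, where P = "\<lambda>k y. \<phi> y = 0 \<longrightarrow> y = 0", OF _ _ one_in allV])
    show "\<phi> 0 = 0 \<longrightarrow> (0::'a) = 0" by simp
  next
    fix k a b assume k: "k \<in> {1..r}" and a: "a \<in> m k" and b: "b \<in> V (Suc k)" and ih: "\<phi> b = 0 \<longrightarrow> b = 0"
    have sk: "Suc k \<in> {1..Suc r}" using k by simp
    show "\<phi> (a + b) = 0 \<longrightarrow> a + b = 0"
    proof
      assume h: "\<phi> (a + b) = 0"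
      then have e: "\<phi> a = - \<phi> b" using linear_add[OF lphi] by (simp add: eq_neg_iff_add_eq_0)
      have "\<phi> b \<in> V (Suc k)" using phiV[OF sk b] .
      then have "\<phi> a \<in> V (Suc k)" using e Vsub[OF sk] by (simp add: subspace_neg)
      moreover have "\<phi> a \<in> m' k" using phim k a by blast
      ultimately have pa: "\<phi> a = 0" using mint'[OF k] by blast
      have "a - \<phi> a \<in> V (Suc k)" using phim k a by blast
      then have "a \<in> V (Suc k)" using pa by simp
      then have a0: "a = 0" using mint[OF k] a by blast
      then have "\<phi> b = 0" using h by simp
      then have "b = 0" using ih by simp
      then show "a + b = 0" using a0 by simp
    qed
  qed

  have comm: "\<phi> (\<delta> t y) = \<delta>' t (\<phi> y)" if t: "t > 0" for t y
  proof (rule V_induct[OF filt ad, where P = "\<lambda>k y. \<phi> (\<delta> t y) = \<delta>' t (\<phi> y)", OF _ _ one_in allV])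
    show "\<phi> (\<delta> t 0) = \<delta>' t (\<phi> 0)"
      using linear_0[OF lphi] linear_0[OF lind[OF t]] linear_0[OF lind'[OF t]] by simp
  next
    fix k a b assume k: "k \<in> {1..r}" and a: "a \<in> m k" and ih: "\<phi> (\<delta> t b) = \<delta>' t (\<phi> b)"
    have "\<phi> (\<delta> t a) = \<delta>' t (\<phi> a)"
      using dm[OF t k a] dm'[OF t k] phim k a linear_scale[OF lphi] by auto
    then show "\<phi> (\<delta> t (a + b)) = \<delta>' t (\<phi> (a + b))"
      using ih linear_add[OF lphi] linear_add[OF lind[OF t]] linear_add[OF lind'[OF t]] by simp
  qed

  have grp: "\<delta> s (\<delta> t y) = \<delta> (s * t) y" if s: "s > 0" and t: "t > 0" for s t y
  proof (rule V_induct[OF filt ad, where P = "\<lambda>k y. \<delta> s (\<delta> t y) = \<delta> (s * t) y", OF _ _ one_in allV])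
    have st: "s * t > 0" using s t by simp
    show "\<delta> s (\<delta> t 0) = \<delta> (s * t) 0"
      using linear_0[OF lind[OF s]] linear_0[OF lind[OF t]] linear_0[OF lind[OF st]] by simp
  next
    fix k a b assume k: "k \<in> {1..r}" and a: "a \<in> m k" and ih: "\<delta> s (\<delta> t b) = \<delta> (s * t) b"
    have st: "s * t > 0" using s t by simp
    have "\<delta> s (\<delta> t a) = \<delta> (s * t) a"
      using dm[OF t k a] dm[OF st k a] dm[OF s k a] linear_scale[OF lind[OF s]]
      by (simp add: power_mult_distrib)
    then show "\<delta> s (\<delta> t (a + b)) = \<delta> (s * t) (a + b)"
      using ih linear_add[OF lind[OF s]] linear_add[OF lind[OF t]] linear_add[OF lind[OF st]] by simp
  qed
  have one: "\<delta> 1 y = y" for y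
  proof (rule V_induct[OF filt ad, where P = "\<lambda>k y. \<delta> 1 y = y", OF _ _ one_in allV])
    show "\<delta> 1 0 = 0" using linear_0[OF lind[of 1]] by simp
  next
    fix k a b assume k: "k \<in> {1..r}" and a: "a \<in> m k" and ih: "\<delta> 1 b = b"
    show "\<delta> 1 (a + b) = a + b"
      using ih dm[of 1 k a] k a linear_add[OF lind[of 1]] by simp
  qed
  have path: "\<exists>f. continuous_on UNIV f \<and> f 0 = 0 \<and> (\<forall>s>0. f s = \<delta> s y)" for y
  proof (rule V_induct[OF filt ad, where P = "\<lambda>k y. \<exists>f. continuous_on UNIV f \<and> f 0 = 0 \<and> (\<forall>s>0. f s = \<delta> s y)", OF _ _ one_in allV])
    show "\<exists>f. continuous_on UNIV f \<and> f 0 = 0 \<and> (\<forall>s>0. f s = \<delta> s 0)"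
      by (rule exI[of _ "\<lambda>s. 0"]) (auto intro: linear_0[OF lind])
  next
    fix k a b assume k: "k \<in> {1..r}" and a: "a \<in> m k"
      and ih: "\<exists>f. continuous_on UNIV f \<and> f 0 = 0 \<and> (\<forall>s>0. f s = \<delta> s b)"
    then obtain g where g: "continuous_on UNIV g" "g 0 = 0" "\<forall>s>0. g s = \<delta> s b" by blast
    show "\<exists>f. continuous_on UNIV f \<and> f 0 = 0 \<and> (\<forall>s>0. f s = \<delta> s (a + b))"
    proof (intro exI conjI allI impI)
      show "continuous_on UNIV (\<lambda>s::real. s ^ k *\<^sub>R a + g s)"
        by (intro continuous_intros g(1))
      show "(0::real) ^ k *\<^sub>R a + g 0 = 0" using k g(2) by simp
      fix s :: real assume s: "s > 0"
      show "s ^ k *\<^sub>R a + g s = \<delta> s (a + b)"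
        using g(3) s dm[OF s k a] linear_add[OF lind[OF s]] by simp
    qed
  qed

  have pow: "((\<lambda>t. t ^ (k - 1) *\<^sub>R \<delta>' (1/t) v) \<longlongrightarrow> 0) at_top" if "k \<in> {1..Suc r}" "v \<in> V k" for k v
  proof (rule V_induct[OF filt ad', where P = "\<lambda>k v. ((\<lambda>t. t ^ (k - 1) *\<^sub>R \<delta>' (1/t) v) \<longlongrightarrow> 0) at_top", OF _ _ that])
    have "\<forall>\<^sub>F t in at_top. t ^ (Suc r - 1) *\<^sub>R \<delta>' (1/t) (0::'a) = 0"
      using eventually_gt_at_top[of "0::real"]
      by (rule eventually_mono) (simp add: linear_0[OF lind'])
    then show "((\<lambda>t. t ^ (Suc r - 1) *\<^sub>R \<delta>' (1/t) 0) \<longlongrightarrow> 0) at_top" by (rule tendsto_eventually)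
  next
    fix k a b assume k: "k \<in> {1..r}" and a: "a \<in> m' k"
      and ih: "((\<lambda>t. t ^ (Suc k - 1) *\<^sub>R \<delta>' (1/t) b) \<longlongrightarrow> 0) at_top"
    have lim1: "((\<lambda>t::real. inverse t *\<^sub>R a + inverse t *\<^sub>R (t ^ k *\<^sub>R \<delta>' (1/t) b)) \<longlongrightarrow> 0 *\<^sub>R a + 0 *\<^sub>R 0) at_top"
      using ih by (intro tendsto_intros tendsto_inverse_0_at_top filterlim_ident) simp_all
    have ev: "\<forall>\<^sub>F t in at_top. inverse t *\<^sub>R a + inverse t *\<^sub>R (t ^ k *\<^sub>R \<delta>' (1/t) b) = t ^ (k - 1) *\<^sub>R \<delta>' (1/t) (a + b)"
      using eventually_gt_at_top[of "0::real"]
    proof (rule eventually_mono)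
      fix t :: real assume t: "t > 0"
      then have t1: "1/t > 0" by simp
      obtain j where kj: "k = Suc j" using k by (cases k) auto
      have "t ^ (k - 1) * (1/t) ^ k = inverse t"
        using t by (simp add: kj power_one_over field_simps)
      moreover have "inverse t * t ^ k = t ^ (k - 1)"
        using t by (simp add: kj)
      ultimately show "inverse t *\<^sub>R a + inverse t *\<^sub>R (t ^ k *\<^sub>R \<delta>' (1/t) b) = t ^ (k - 1) *\<^sub>R \<delta>' (1/t) (a + b)"
        using dm'[OF t1 k a] linear_add[OF lind'[OF t1]] by (simp add: scaleR_add_right)
    qed
    show "((\<lambda>t. t ^ (k - 1) *\<^sub>R \<delta>' (1/t) (a + b)) \<longlongrightarrow> 0) at_top"
      using tendsto_cong[OF ev] lim1 by simp
  qed

  define Bt where "Bt = (\<lambda>t y. \<delta>' (1/t) (\<delta> t y - \<phi> (\<delta> t y)))"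
  have Blim: "((\<lambda>t. Bt t y) \<longlongrightarrow> 0) at_top" for y
  proof (rule V_induct[OF filt ad, where P = "\<lambda>k y. ((\<lambda>t. Bt t y) \<longlongrightarrow> 0) at_top", OF _ _ one_in allV])
    have "\<forall>\<^sub>F t in at_top. Bt t 0 = 0"
      using eventually_gt_at_top[of "0::real"]
      by (rule eventually_mono) (simp add: Bt_def linear_0[OF lind] linear_0[OF lind'] linear_0[OF lphi])
    then show "((\<lambda>t. Bt t 0) \<longlongrightarrow> 0) at_top" by (rule tendsto_eventually)
  next
    fix k a b assume k: "k \<in> {1..r}" and a: "a \<in> m k"
      and ih: "((\<lambda>t. Bt t b) \<longlongrightarrow> 0) at_top"
    have sk: "Suc k \<in> {1..Suc r}" using k by simp
    have "a - \<phi> a \<in> V (Suc k)" using phim k a by blast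
    from pow[OF sk this] have p: "((\<lambda>t. t ^ k *\<^sub>R \<delta>' (1/t) (a - \<phi> a)) \<longlongrightarrow> 0) at_top" by simp
    have ev: "\<forall>\<^sub>F t in at_top. t ^ k *\<^sub>R \<delta>' (1/t) (a - \<phi> a) + Bt t b = Bt t (a + b)"
      using eventually_gt_at_top[of "0::real"]
    proof (rule eventually_mono)
      fix t :: real assume t: "t > 0"
      then have t1: "1/t > 0" by simp
      have "\<delta> t (a + b) - \<phi> (\<delta> t (a + b)) = t ^ k *\<^sub>R (a - \<phi> a) + (\<delta> t b - \<phi> (\<delta> t b))"
        using dm[OF t k a] linear_add[OF lind[OF t]] linear_add[OF lphi] linear_scale[OF lphi]
        by (simp add: algebra_simps)
      then show "t ^ k *\<^sub>R \<delta>' (1/t) (a - \<phi> a) + Bt t b = Bt t (a + b)"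
        unfolding Bt_def using linear_add[OF lind'[OF t1]] linear_scale[OF lind'[OF t1]] by simp
    qed
    show "((\<lambda>t. Bt t (a + b)) \<longlongrightarrow> 0) at_top"
      using tendsto_cong[OF ev] tendsto_add[OF p ih] by simp
  qed

  define N where "N = (\<lambda>x. N' (\<phi> x))"
  have contphi: "continuous_on UNIV \<phi>" using lphi by (simp add: linear_continuous_on linear_conv_bounded_linear)
  have qN: "quasi_norm \<delta> N"
    unfolding quasi_norm_def
  proof (intro conjI allI impI)
    show "continuous_on UNIV N" unfolding N_def
      using continuous_on_compose[OF contphi, of N'] continuous_on_subset[of UNIV N' "range \<phi>"] q'
      by (auto simp: quasi_norm_def o_def)
    fix x
    show "0 \<le> N x" using q' by (simp add: N_def quasi_norm_def)
    show "(N x = 0) = (x = 0)" using q' phiinj linear_0[OF lphi] by (auto simp: N_def quasi_norm_def)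
  next
    fix t :: real and x assume t: "t > 0"
    show "N (\<delta> t x) = t * N x" using q' t comm[OF t] by (simp add: N_def quasi_norm_def)
  qed

  have oN: "little_o_at_infinity N N'"
    unfolding little_o_at_infinity_def
  proof (intro allI impI)
    fix \<epsilon> :: real assume \<epsilon>: "\<epsilon> > 0"
    obtain M where M: "\<forall>y. N y \<le> 1 \<longrightarrow> norm y \<le> M"
      using bounded_level[OF qN lind path one grp] by blast
    define M0 where "M0 = max M 0"
    have M0: "M0 \<ge> 0" unfolding M0_def by simp
    obtain Bp where Bp: "\<forall>x. norm (\<phi> x) \<le> Bp * norm x" using linear_bounded[OF lphi] by blast
    define K where "K = cball (0::'a) (\<bar>Bp\<bar> * M0 + 1)"
    have "continuous_on K N'" using continuous_on_subset[of UNIV N' K] q' by (simp add: quasi_norm_def)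
    then have ucK: "uniformly_continuous_on K N'"
      using compact_uniformly_continuous[of K N'] by (simp add: K_def)
    then obtain \<eta> where \<eta>: "\<eta> > 0" "\<forall>u\<in>K. \<forall>u'\<in>K. dist u' u < \<eta> \<longrightarrow> dist (N' u') (N' u) < \<epsilon>"
      unfolding uniformly_continuous_on_def using \<epsilon> by metis
    define \<beta> where "\<beta> = (\<lambda>t. \<Sum>b\<in>Basis. norm (Bt t b))"
    have \<beta>lim: "(\<beta> \<longlongrightarrow> 0) at_top"
      unfolding \<beta>_def using tendsto_sum[of Basis "\<lambda>b t. norm (Bt t b)" "\<lambda>_. 0"] tendsto_norm_zero[OF Blim]
      by simp
    define e0 where "e0 = min \<eta> 1 / (M0 + 1)"
    have e0: "e0 > 0" using \<eta> M0 by (simp add: e0_def)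
    have "\<forall>\<^sub>F t in at_top. \<beta> t < e0" using order_tendstoD(2)[OF \<beta>lim e0] .
    then obtain R0 where R0: "\<forall>t\<ge>R0. \<beta> t < e0" by (auto simp: eventually_at_top_linorder)
    show "\<exists>R. \<forall>x. R \<le> N x \<longrightarrow> \<bar>N x - N' x\<bar> \<le> \<epsilon> * N x"
    proof (intro exI allI impI)
      fix x assume xR: "max R0 1 \<le> N x"
      define t where "t = N x"
      have t: "t > 0" "t \<ge> R0" using xR t_def by auto
      have t1: "1/t > 0" using t by simp
      define y where "y = \<delta> (1/t) x"
      have "N y = (1/t) * N x" using qN t1 unfolding y_def quasi_norm_def by blast
      then have Ny: "N y = 1" using t by (simp add: t_def)
      have "norm y \<le> M" using M Ny by simp
      then have ny: "norm y \<le> M0" unfolding M0_def by linarith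
      define w where "w = \<phi> y"
      have Nw: "N' w = 1" using Ny by (simp add: N_def w_def)
      have "norm w \<le> Bp * norm y" using Bp w_def by simp
      also have "\<dots> \<le> \<bar>Bp\<bar> * norm y" by (intro mult_right_mono) auto
      also have "\<dots> \<le> \<bar>Bp\<bar> * M0" using ny by (intro mult_left_mono) auto
      finally have nw: "norm w \<le> \<bar>Bp\<bar> * M0" .
      have l1: "linear (\<lambda>y. \<delta> t y - \<phi> (\<delta> t y))"
        using linear_compose_sub[OF lind[OF t(1)] linear_compose[OF lind[OF t(1)] lphi, unfolded o_def]] .
      have linB: "linear (Bt t)" unfolding Bt_def using linear_compose[OF l1 lind'[OF t1], unfolded o_def] .
      have "norm (Bt t y) \<le> norm y * \<beta> t"
        unfolding \<beta>_def by (rule linear_norm_basis_bound[OF linB])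
      also have "\<dots> \<le> M0 * \<beta> t"
        using ny by (intro mult_right_mono) (auto simp: \<beta>_def intro: sum_nonneg)
      also have "\<dots> \<le> M0 * e0" using R0 t(2) M0 by (intro mult_left_mono) auto
      also have "\<dots> < min \<eta> 1"
      proof -
        have "M0 * e0 = (M0 / (M0 + 1)) * min \<eta> 1" unfolding e0_def by simp
        also have "\<dots> < 1 * min \<eta> 1" using M0 \<eta> by (intro mult_strict_right_mono) auto
        finally show ?thesis by simp
      qed
      finally have nB: "norm (Bt t y) < min \<eta> 1" .
      have dx: "\<delta> t y = x" using grp[OF t(1) t1] one t by (simp add: y_def)
      define v where "v = \<delta>' (1/t) x"
      have "w = \<delta>' (1/t) (\<phi> x)" using comm[OF t1] by (simp add: w_def y_def)
      moreover have "Bt t y = \<delta>' (1/t) x - \<delta>' (1/t) (\<phi> x)"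
        unfolding Bt_def dx using linear_diff[OF lind'[OF t1]] by simp
      ultimately have vw: "v - w = Bt t y" by (simp add: v_def)
      have wK: "w \<in> K" using nw by (simp add: K_def)
      have "norm v \<le> norm w + norm (v - w)" by (metis norm_triangle_sub add.commute)
      then have vK: "v \<in> K" using nw nB vw by (simp add: K_def)
      have "dist v w < \<eta>" using nB vw by (simp add: dist_norm)
      then have "dist (N' v) (N' w) < \<epsilon>" using \<eta>(2) wK vK by blast
      then have h: "\<bar>N' v - 1\<bar> < \<epsilon>" using Nw by (simp add: dist_real_def)
      have Nv: "N' v = (1/t) * N' x" using q' t1 unfolding v_def quasi_norm_def by blast
      have "N' x - t = t * (N' v - 1)" using t(1) by (simp add: Nv field_simps)
      then have "\<bar>N' x - t\<bar> = t * \<bar>N' v - 1\<bar>" using t(1) by (simp add: abs_mult)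
      also have "\<dots> \<le> t * \<epsilon>" using h t(1) by (intro mult_left_mono) auto
      finally have "\<bar>N' x - t\<bar> \<le> t * \<epsilon>" .
      then show "\<bar>N x - N' x\<bar> \<le> \<epsilon> * N x" unfolding t_def by (simp add: abs_le_iff mult.commute)
    qed
  qed

  have uniq: "N1 = N" if "quasi_norm \<delta> N1 \<and> little_o_at_infinity N1 N'" for N1
    using that qN oN by (intro qn_unique[of \<delta> N1 N N']) auto
  have A: "\<exists>!N. quasi_norm \<delta> N \<and> little_o_at_infinity N N'"
  proof (rule ex1I[of _ N])
    show "quasi_norm \<delta> N \<and> little_o_at_infinity N N'" using qN oN by simp
    fix N1 assume "quasi_norm \<delta> N1 \<and> little_o_at_infinity N1 N'"
    then show "N1 = N" by (rule uniq)
  qed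
  have B: "\<forall>N1. quasi_norm \<delta> N1 \<and> little_o_at_infinity N1 N' \<longrightarrow> N1 = (\<lambda>x. N' (\<phi> x))"
  proof (intro allI impI)
    fix N1 assume "quasi_norm \<delta> N1 \<and> little_o_at_infinity N1 N'"
    then have "N1 = N" by (rule uniq)
    then show "N1 = (\<lambda>x. N' (\<phi> x))" by (simp add: N_def)
  qed
  show ?thesis using A B by (rule conjI)
qed

end
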